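(* Let $M=(S,\Sigma,\delta,s_0,F)$ be a deterministic finite automaton, let $T\ge 1$ be an integer, and for each $s\in S$ let $P(\cdot\mid s)$ and $Q(\cdot\mid s)$ be probability distributions on $\Sigma$. Define distributions $P$ and $Q$ on $\Sigma^T$ by $P(x)=\prod_{t=1}^T P(\sigma_t\mid s_t)$ and $Q(x)=\prod_{t=1}^T Q(\sigma_t\mid s_t)$ for $x=\sigma_1\cdots\sigma_T$, where $s_1\cdots s_{T+1}$ is the state sequence induced by $x$, and let $f^*(x)=\mathbb{1}(s_{T+1}\in F)$. Define $P_t$ on $S$ by $P_1(s')=\mathbb{1}(s'=s_0)$ and $P_t(s')=\mathbb{P}_{s\sim P_{t-1},\sigma\sim P(\cdot\mid s)}[s'=\delta(s,\sigma)]$ for $t\ge2$, and $P_t(s,\sigma)=P_t(s)P(\sigma\mid s)$. Let $\hat g:S\times\Sigma\to S$ and $\hat h:S\to\{0,1\}$ be arbitrary functions, and define $\hat f:\Sigma^T\to\{0,1\}$ by $\hat f(\sigma_1\cdots\sigma_T)=\hat h(\hat s_{T+1})$, where $\hat s_1=s_0$ and $\hat s_{t+1}=\hat g(\hat s_t,\sigma_t)$. Let $\epsilon=\max_{s\in S}\mathrm{TV}(P(\sigma\mid s),Q(\sigma\mid s))$ and $$\tilde L_P(\hat f)=\sum_{t=1}^T L_{P_t}(\hat g)+L_{P_{T+1}}(\hat h).$$ Then $$L_Q(\hat f)\le \tilde L_P(\hat f)+2T^2\epsilon.$$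
   Context: A deterministic finite automaton $M=(S,\Sigma,\delta,s_0,F)$ has a finite state set $S$, a finite alphabet $\Sigma$, a transition function $\delta:S\times\Sigma\to S$, an initial state $s_0\in S$ and final states $F\subseteq S$. For $x=\sigma_1\cdots\sigma_T$, the induced state sequence is $s_1=s_0$, $s_{t+1}=\delta(s_t,\sigma_t)$. Losses: $L_Q(\hat f)=\mathbb{P}_{x\sim Q}[\hat f(x)\neq f^*(x)]$; $L_{P_t}(\hat g)=\mathbb{P}_{(s,\sigma)\sim P_t(s,\sigma)}[\hat g(s,\sigma)\neq\delta(s,\sigma)]$; $L_{P_{T+1}}(\hat h)=\mathbb{P}_{s\sim P_{T+1}}[\hat h(s)\neq\mathbb{1}(s\in F)]$. The total variation distance is defined without the factor $1/2$: $\mathrm{TV}(\mu,\nu)=\sum_a|\mu(a)-\nu(a)|$. *)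

theory Defs
  imports Complex_Main
begin

text \<open>The final state s_{T+1}
  reached from s from reading xs is foldl delta s xs.\<close>

definition run :: "('a \<Rightarrow> 'b \<Rightarrow> 'a) \<Rightarrow> 'a \<Rightarrow> 'b list \<Rightarrow> 'a" where
  "run delta s xs = foldl delta s xs"

fun word_prob :: "('a \<Rightarrow> 'b \<Rightarrow> real) \<Rightarrow> ('a \<Rightarrow> 'b \<Rightarrow> 'a) \<Rightarrow> 'a \<Rightarrow> 'b list \<Rightarrow> real" where
  "word_prob P delta s [] = 1"
| "word_prob P delta s (c # xs) = P s c * word_prob P delta (delta s c) xs"

text \<open>State marginal: state_dist P delta s0 n = P_{n+1} (paper's 1-based indexing).\<close>
fun state_dist :: "('a::finite \<Rightarrow> 'b::finite \<Rightarrow> real) \<Rightarrow> ('a \<Rightarrow> 'b \<Rightarrow> 'a) \<Rightarrow> 'a \<Rightarrow> nat \<Rightarrow> 'a \<Rightarrow> real" where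
  "state_dist P delta s0 0 s' = (if s' = s0 then 1 else 0)"
| "state_dist P delta s0 (Suc n) s' =
     (\<Sum>s\<in>UNIV. \<Sum>c\<in>UNIV. state_dist P delta s0 n s * P s c * (if s' = delta s c then 1 else 0))"

definition P_t :: "('a::finite \<Rightarrow> 'b::finite \<Rightarrow> real) \<Rightarrow> ('a \<Rightarrow> 'b \<Rightarrow> 'a) \<Rightarrow> 'a \<Rightarrow> nat \<Rightarrow> 'a \<Rightarrow> real" where
  "P_t P delta s0 t = state_dist P delta s0 (t - 1)"

definition word_loss :: "('a \<Rightarrow> 'b \<Rightarrow> real) \<Rightarrow> ('a \<Rightarrow> 'b \<Rightarrow> 'a) \<Rightarrow> 'a \<Rightarrow> nat
    \<Rightarrow> ('b list \<Rightarrow> bool) \<Rightarrow> ('b list \<Rightarrow> bool) \<Rightarrow> real" where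
  "word_loss Q delta s0 T fhat fstar =
     (\<Sum>x\<in>{xs. length xs = T}. word_prob Q delta s0 x * (if fhat x \<noteq> fstar x then 1 else 0))"

definition trans_loss :: "('a::finite \<times> 'b::finite \<Rightarrow> real) \<Rightarrow> ('a \<Rightarrow> 'b \<Rightarrow> 'a) \<Rightarrow> ('a \<Rightarrow> 'b \<Rightarrow> 'a) \<Rightarrow> real" where
  "trans_loss D ghat delta = (\<Sum>(s,c)\<in>UNIV. D (s,c) * (if ghat s c \<noteq> delta s c then 1 else 0))"

definition final_loss :: "('a::finite \<Rightarrow> real) \<Rightarrow> ('a \<Rightarrow> bool) \<Rightarrow> 'a set \<Rightarrow> real" where
  "final_loss D hhat F = (\<Sum>s\<in>UNIV. D s * (if hhat s \<noteq> (s \<in> F) then 1 else 0))"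

text \<open>Total variation without the factor 1/2.\<close>
definition TV :: "('b::finite \<Rightarrow> real) \<Rightarrow> ('b \<Rightarrow> real) \<Rightarrow> real" where
  "TV mu nu = (\<Sum>c\<in>UNIV. \<bar>mu c - nu c\<bar>)"

definition is_cond_dist :: "('a \<Rightarrow> 'b::finite \<Rightarrow> real) \<Rightarrow> bool" where
  "is_cond_dist P \<longleftrightarrow> (\<forall>s c. 0 \<le> P s c) \<and> (\<forall>s. (\<Sum>c\<in>UNIV. P s c) = 1)"

end

theory Submission
  imports Defs
begin

lemma fin_W: "finite {xs::'b::finite list. length xs = k}"
  using finite_lists_length_eq[OF finite_UNIV, of k] by simp

lemma sum_cons: "(\<Sum>x\<in>{xs::'b::finite list. length xs = Suc k}. f x)
   = (\<Sum>c\<in>UNIV. \<Sum>x\<in>{xs. length xs = k}. f (c#x))"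
proof -
  have e: "{xs::'b list. length xs = Suc k} = (\<lambda>(c,x). c#x) ` (UNIV \<times> {xs. length xs = k})"
    by (auto simp: length_Suc_conv image_iff)
  have i: "inj_on (\<lambda>(c,x). c#x) (UNIV \<times> {xs::'b list. length xs = k})"
    by (auto simp: inj_on_def)
  show ?thesis unfolding e by (subst sum.reindex[OF i]) (simp add: sum.cartesian_product split_def)
qed

lemma sum_snoc: "(\<Sum>x\<in>{xs::'b::finite list. length xs = Suc k}. f x)
   = (\<Sum>x\<in>{xs. length xs = k}. \<Sum>c\<in>UNIV. f (x@[c]))"
proof -
  have e: "{xs::'b list. length xs = Suc k} = (\<lambda>(x,c). x@[c]) ` ({xs. length xs = k} \<times> UNIV)"
    by (auto simp: length_Suc_conv_rev image_iff)
  have i: "inj_on (\<lambda>(x,c). x@[c]) ({xs::'b list. length xs = k} \<times> UNIV)"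
    by (auto simp: inj_on_def)
  show ?thesis unfolding e by (subst sum.reindex[OF i]) (simp add: sum.cartesian_product split_def)
qed

lemma sum_app: "(\<Sum>x\<in>{xs::'b::finite list. length xs = n + m}. f x)
   = (\<Sum>x\<in>{xs. length xs = n}. \<Sum>y\<in>{xs. length xs = m}. f (x@y))"
proof -
  have e: "{xs::'b list. length xs = n + m} = (\<lambda>(x,y). x@y) ` ({xs. length xs = n} \<times> {xs. length xs = m})"
  proof (safe)
    fix x :: "'b list" assume "length x = n + m"
    then show "x \<in> (\<lambda>(x,y). x@y) ` ({xs. length xs = n} \<times> {xs. length xs = m})"
      by (intro image_eqI[of _ _ "(take n x, drop n x)"]) auto
  qed auto
  have i: "inj_on (\<lambda>(x,y). x@y) ({xs::'b list. length xs = n} \<times> {xs. length xs = m})"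
    by (auto simp: inj_on_def)
  show ?thesis unfolding e by (subst sum.reindex[OF i]) (simp add: sum.cartesian_product split_def)
qed

lemma wp_nonneg: "is_cond_dist P \<Longrightarrow> 0 \<le> word_prob P d s x"
  by (induction x arbitrary: s) (auto simp: is_cond_dist_def)

lemma wp_sum1: "is_cond_dist (P::'a \<Rightarrow> 'b::finite \<Rightarrow> real) \<Longrightarrow>
   (\<Sum>x\<in>{xs::'b list. length xs = k}. word_prob P d s x) = 1"
proof (induction k arbitrary: s)
  case 0 then show ?case by simp
next
  case (Suc k)
  then show ?case using Suc
    by (simp add: sum_cons sum_distrib_left[symmetric] is_cond_dist_def)
qed

lemma wp_app: "word_prob P d s (xs@ys) = word_prob P d s xs * word_prob P d (run d s xs) ys"
  by (induction xs arbitrary: s) (auto simp: run_def)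

lemma wp_snoc: "word_prob P d s (xs@[c]) = word_prob P d s xs * P (run d s xs) c"
  by (simp add: wp_app)

lemma run_snoc: "run d s (xs@[c]) = d (run d s xs) c"
  by (simp add: run_def)

lemma delta_aux: "(\<Sum>s'\<in>(UNIV::'a::finite set). (a::real) * (if s' = b then 1 else 0) * h s') = a * h b"
proof -
  have "(\<Sum>s'\<in>(UNIV::'a set). a * (if s' = b then 1 else 0) * h s') = (\<Sum>s'\<in>UNIV. if s' = b then a * h s' else 0)"
    by (rule sum.cong) auto
  then show ?thesis by simp
qed

lemma lemA: "(\<Sum>x\<in>{xs::'b::finite list. length xs = n}. word_prob P d s0 x * h (run d s0 x))
   = (\<Sum>s\<in>UNIV. state_dist P d s0 n s * (h s :: real))"
proof (induction n arbitrary: h)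
  case 0
  have "{xs::'b list. length xs = 0} = {[]}" by auto
  then show ?case by (simp add: run_def if_distrib[of "\<lambda>x. x * _"] cong: if_cong)
next
  case (Suc n)
  have "(\<Sum>x\<in>{xs::'b list. length xs = Suc n}. word_prob P d s0 x * h (run d s0 x))
     = (\<Sum>x\<in>{xs::'b list. length xs = n}. word_prob P d s0 x *
          (\<lambda>s. \<Sum>c\<in>UNIV. P s c * h (d s c)) (run d s0 x))"
    by (simp add: sum_snoc wp_snoc run_snoc sum_distrib_left mult.assoc)
  also have "\<dots> = (\<Sum>s\<in>UNIV. state_dist P d s0 n s * (\<Sum>c\<in>UNIV. P s c * h (d s c)))"
    by (rule Suc)
  also have "\<dots> = (\<Sum>s\<in>UNIV. \<Sum>c\<in>UNIV. \<Sum>s'\<in>UNIV. state_dist P d s0 n s * P s c * (if s' = d s c then 1 else 0) * h s')"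
    unfolding delta_aux sum_distrib_left by (simp only: mult.assoc)
  also have "\<dots> = (\<Sum>s'\<in>UNIV. state_dist P d s0 (Suc n) s' * h s')"
  proof -
    have "(\<Sum>s'\<in>UNIV. state_dist P d s0 (Suc n) s' * h s') = (\<Sum>s'\<in>UNIV. \<Sum>s\<in>UNIV. \<Sum>c\<in>UNIV. state_dist P d s0 n s * P s c * (if s' = d s c then 1 else 0) * h s')"
      by (simp only: state_dist.simps sum_distrib_right)
    also have "\<dots> = (\<Sum>s\<in>UNIV. \<Sum>s'\<in>UNIV. \<Sum>c\<in>UNIV. state_dist P d s0 n s * P s c * (if s' = d s c then 1 else 0) * h s')"
      by (rule sum.swap)
    also have "\<dots> = (\<Sum>s\<in>UNIV. \<Sum>c\<in>UNIV. \<Sum>s'\<in>UNIV. state_dist P d s0 n s * P s c * (if s' = d s c then 1 else 0) * h s')"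
      by (rule sum.cong[OF refl], rule sum.swap)
    finally show ?thesis by simp
  qed
  finally show ?case .
qed

lemma W0: "{xs::'b list. length xs = 0} = {[]}" by auto

lemma tv_bound:
  assumes P: "is_cond_dist P" and Q: "is_cond_dist Q" and e: "\<forall>s. TV (P s) (Q s) \<le> e"
  shows "(\<Sum>x\<in>{xs::'b::finite list. length xs = n}. \<bar>word_prob P d s x - word_prob Q d s x\<bar>) \<le> real n * e"
proof (induction n arbitrary: s)
  case 0 then show ?case by (simp add: W0)
next
  case (Suc n)
  let ?a = "\<lambda>c x. word_prob P d (d s c) x" and ?b = "\<lambda>c x. word_prob Q d (d s c) x"
  have "(\<Sum>x\<in>{xs::'b list. length xs = Suc n}. \<bar>word_prob P d s x - word_prob Q d s x\<bar>)
     = (\<Sum>c\<in>UNIV. \<Sum>x\<in>{xs::'b list. length xs = n}. \<bar>P s c * ?a c x - Q s c * ?b c x\<bar>)"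
    by (simp add: sum_cons)
  also have "\<dots> \<le> (\<Sum>c\<in>UNIV. \<Sum>x\<in>{xs::'b list. length xs = n}. \<bar>P s c - Q s c\<bar> * ?a c x + Q s c * \<bar>?a c x - ?b c x\<bar>)"
  proof (intro sum_mono)
    fix c x
    have "P s c * ?a c x - Q s c * ?b c x = (P s c - Q s c) * ?a c x + Q s c * (?a c x - ?b c x)"
      by (simp add: algebra_simps)
    also have "\<bar>\<dots>\<bar> \<le> \<bar>(P s c - Q s c) * ?a c x\<bar> + \<bar>Q s c * (?a c x - ?b c x)\<bar>"
      by (rule abs_triangle_ineq)
    also have "\<dots> = \<bar>P s c - Q s c\<bar> * ?a c x + Q s c * \<bar>?a c x - ?b c x\<bar>"
      using wp_nonneg[OF P] Q by (simp add: abs_mult is_cond_dist_def)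
    finally show "\<bar>P s c * ?a c x - Q s c * ?b c x\<bar> \<le> \<bar>P s c - Q s c\<bar> * ?a c x + Q s c * \<bar>?a c x - ?b c x\<bar>" .
  qed
  also have "\<dots> = (\<Sum>c\<in>UNIV. \<bar>P s c - Q s c\<bar> * (\<Sum>x\<in>{xs::'b list. length xs = n}. ?a c x)
        + Q s c * (\<Sum>x\<in>{xs::'b list. length xs = n}. \<bar>?a c x - ?b c x\<bar>))"
    by (simp add: sum.distrib sum_distrib_left)
  also have "\<dots> \<le> (\<Sum>c\<in>UNIV. \<bar>P s c - Q s c\<bar> + Q s c * (real n * e))"
  proof (intro sum_mono add_mono)
    fix c
    show "\<bar>P s c - Q s c\<bar> * (\<Sum>x\<in>{xs::'b list. length xs = n}. ?a c x) \<le> \<bar>P s c - Q s c\<bar>"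
      by (simp add: wp_sum1[OF P])
    show "Q s c * (\<Sum>x\<in>{xs::'b list. length xs = n}. \<bar>?a c x - ?b c x\<bar>) \<le> Q s c * (real n * e)"
      using Suc[of "d s c"] Q by (intro mult_left_mono) (auto simp: is_cond_dist_def)
  qed
  also have "\<dots> = TV (P s) (Q s) + real n * e"
    using Q by (simp add: sum.distrib TV_def sum_distrib_right[symmetric] is_cond_dist_def)
  also have "\<dots> \<le> real (Suc n) * e" using e by (simp add: algebra_simps)
  finally show ?case .
qed

lemma run_eq:
  "(\<forall>t<length x. ghat (run d s0 (take t x)) (x!t) = d (run d s0 (take t x)) (x!t))
    \<Longrightarrow> run ghat s0 x = run d s0 x"
proof (induction x rule: rev_induct)
  case Nil then show ?case by (simp add: run_def)
next
  case (snoc c xs)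
  have "\<forall>t<length xs. ghat (run d s0 (take t xs)) (xs!t) = d (run d s0 (take t xs)) (xs!t)"
  proof (intro allI impI)
    fix t assume "t < length xs"
    then show "ghat (run d s0 (take t xs)) (xs!t) = d (run d s0 (take t xs)) (xs!t)"
      using snoc.prems[rule_format, of t] by (simp add: nth_append)
  qed
  then have "run ghat s0 xs = run d s0 xs" by (rule snoc.IH)
  moreover have "ghat (run d s0 xs) c = d (run d s0 xs) c"
    using snoc.prems[rule_format, of "length xs"] by simp
  ultimately show ?case by (simp add: run_snoc)
qed

lemma pointwise:
  "(if hhat (run ghat s0 x) \<noteq> (run d s0 x \<in> F) then 1 else 0 :: real)
   \<le> (\<Sum>t<length x. if ghat (run d s0 (take t x)) (x!t) \<noteq> d (run d s0 (take t x)) (x!t) then 1 else 0)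
     + (if hhat (run d s0 x) \<noteq> (run d s0 x \<in> F) then 1 else 0)"
proof (cases "\<forall>t<length x. ghat (run d s0 (take t x)) (x!t) = d (run d s0 (take t x)) (x!t)")
  case True
  then have "run ghat s0 x = run d s0 x" by (rule run_eq)
  then show ?thesis by (simp add: sum_nonneg)
next
  case False
  then obtain t where t: "t < length x" "ghat (run d s0 (take t x)) (x!t) \<noteq> d (run d s0 (take t x)) (x!t)" by auto
  have "(1::real) \<le> (\<Sum>t<length x. if ghat (run d s0 (take t x)) (x!t) \<noteq> d (run d s0 (take t x)) (x!t) then 1 else 0)"
    using member_le_sum[of t "{..<length x}" "\<lambda>t. if ghat (run d s0 (take t x)) (x!t) \<noteq> d (run d s0 (take t x)) (x!t) then (1::real) else 0"] t
    by simp
  then show ?thesis by simp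
qed

lemma bad_t:
  assumes P: "is_cond_dist P" and tT: "t < T"
  shows "(\<Sum>x\<in>{xs::'b::finite list. length xs = T}. word_prob P d s0 x * (if G (run d s0 (take t x)) (x!t) then 1 else 0))
    = (\<Sum>s\<in>UNIV. state_dist P d s0 t s * (\<Sum>c\<in>UNIV. P s c * (if G s c then 1 else 0)))"
proof -
  define m where "m = T - t - 1"
  have T: "T = t + Suc m" using tT unfolding m_def by simp
  have "(\<Sum>x\<in>{xs::'b list. length xs = T}. word_prob P d s0 x * (if G (run d s0 (take t x)) (x!t) then 1 else 0))
    = (\<Sum>xs\<in>{xs::'b list. length xs = t}. \<Sum>ys\<in>{xs::'b list. length xs = Suc m}.
         word_prob P d s0 (xs@ys) * (if G (run d s0 (take t (xs@ys))) ((xs@ys)!t) then 1 else 0))"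
    unfolding T by (rule sum_app)
  also have "\<dots> = (\<Sum>xs\<in>{xs::'b list. length xs = t}. word_prob P d s0 xs *
        (\<lambda>s. \<Sum>c\<in>UNIV. P s c * (if G s c then 1 else 0)) (run d s0 xs))"
  proof (rule sum.cong[OF refl])
    fix xs :: "'b list" assume "xs \<in> {xs. length xs = t}"
    then have L: "length xs = t" by simp
    have "(\<Sum>ys\<in>{xs::'b list. length xs = Suc m}.
         word_prob P d s0 (xs@ys) * (if G (run d s0 (take t (xs@ys))) ((xs@ys)!t) then 1 else 0))
      = (\<Sum>c\<in>UNIV. \<Sum>ys\<in>{xs::'b list. length xs = m}.
         word_prob P d s0 xs * (P (run d s0 xs) c * (if G (run d s0 xs) c then 1 else 0)) * word_prob P d (d (run d s0 xs) c) ys)"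
      unfolding sum_cons
    proof (intro sum.cong refl)
      fix c ys
      have w: "word_prob P d s0 (xs @ c # ys) = word_prob P d s0 xs * (P (run d s0 xs) c * word_prob P d (d (run d s0 xs) c) ys)"
        by (simp only: wp_app word_prob.simps)
      have tk: "take t (xs @ c # ys) = xs" "(xs @ c # ys) ! t = c" using L by auto
      show "word_prob P d s0 (xs @ c # ys) * (if G (run d s0 (take t (xs @ c # ys))) ((xs @ c # ys) ! t) then 1 else 0)
        = word_prob P d s0 xs * (P (run d s0 xs) c * (if G (run d s0 xs) c then 1 else 0)) * word_prob P d (d (run d s0 xs) c) ys"
        unfolding w tk by (simp only: mult_ac)
    qed
    also have "\<dots> = (\<Sum>c\<in>UNIV. word_prob P d s0 xs * (P (run d s0 xs) c * (if G (run d s0 xs) c then 1 else 0)))"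
      by (simp add: sum_distrib_left[symmetric] wp_sum1[OF P])
    finally show "(\<Sum>ys\<in>{xs::'b list. length xs = Suc m}.
         word_prob P d s0 (xs@ys) * (if G (run d s0 (take t (xs@ys))) ((xs@ys)!t) then 1 else 0))
       = word_prob P d s0 xs * (\<lambda>s. \<Sum>c\<in>UNIV. P s c * (if G s c then 1 else 0)) (run d s0 xs)"
      by (simp add: sum_distrib_left)
  qed
  also have "\<dots> = (\<Sum>s\<in>UNIV. state_dist P d s0 t s * (\<Sum>c\<in>UNIV. P s c * (if G s c then 1 else 0)))"
    by (rule lemA)
  finally show ?thesis .
qed

lemma trans_loss_eq:
  "trans_loss (\<lambda>(s,c). P_t P delta s0 (Suc t) s * P s c) ghat delta
   = (\<Sum>s\<in>UNIV. state_dist P delta s0 t s * (\<Sum>c\<in>UNIV. P s c * (if ghat s c \<noteq> delta s c then 1 else 0)))"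
  unfolding trans_loss_def P_t_def
  by (simp add: UNIV_Times_UNIV[symmetric] sum.cartesian_product[symmetric] sum_distrib_left mult.assoc del: UNIV_Times_UNIV)

theorem theorem4p6:
  fixes delta :: "'a::finite \<Rightarrow> 'b::finite \<Rightarrow> 'a" and s0 :: 'a and F :: "'a set"
    and T :: nat and P Q :: "'a \<Rightarrow> 'b \<Rightarrow> real"
    and ghat :: "'a \<Rightarrow> 'b \<Rightarrow> 'a" and hhat :: "'a \<Rightarrow> bool"
  assumes "T \<ge> 1"
    and "is_cond_dist P" and "is_cond_dist Q"
  shows "word_loss Q delta s0 T (\<lambda>x. hhat (run ghat s0 x)) (\<lambda>x. run delta s0 x \<in> F)
    \<le> (\<Sum>t=1..T. trans_loss (\<lambda>(s,c). P_t P delta s0 t s * P s c) ghat delta)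
       + final_loss (P_t P delta s0 (T+1)) hhat F
       + 2 * real T ^ 2 * (MAX s\<in>UNIV. TV (P s) (Q s))"
proof -
  note PP = assms(2) and QQ = assms(3)
  define e where "e = (MAX s\<in>UNIV. TV (P s) (Q s))"
  have e_ge: "\<forall>s. TV (P s) (Q s) \<le> e" unfolding e_def by (auto intro: Max_ge)
  have "0 \<le> TV (P s0) (Q s0)" unfolding TV_def by (simp add: sum_nonneg)
  then have e0: "0 \<le> e" using e_ge by (meson order_trans)
  let ?W = "{xs::'b list. length xs = T}"
  let ?fh = "\<lambda>x. hhat (run ghat s0 x)" and ?fs = "\<lambda>x. run delta s0 x \<in> F"
  let ?I = "\<lambda>x. if ?fh x \<noteq> ?fs x then 1 else (0::real)"
  let ?bt = "\<lambda>t x. if ghat (run delta s0 (take t x)) (x!t) \<noteq> delta (run delta s0 (take t x)) (x!t) then 1 else (0::real)"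
  let ?bf = "\<lambda>x. if hhat (run delta s0 x) \<noteq> (run delta s0 x \<in> F) then 1 else (0::real)"
  have step1: "word_loss Q delta s0 T ?fh ?fs \<le> word_loss P delta s0 T ?fh ?fs + real T * e"
  proof -
    have "word_loss Q delta s0 T ?fh ?fs \<le> (\<Sum>x\<in>?W. word_prob P delta s0 x * ?I x
        + \<bar>word_prob P delta s0 x - word_prob Q delta s0 x\<bar>)"
      unfolding word_loss_def by (intro sum_mono) auto
    also have "\<dots> = word_loss P delta s0 T ?fh ?fs + (\<Sum>x\<in>?W. \<bar>word_prob P delta s0 x - word_prob Q delta s0 x\<bar>)"
      unfolding word_loss_def by (simp add: sum.distrib)
    also have "\<dots> \<le> word_loss P delta s0 T ?fh ?fs + real T * e"
      using tv_bound[OF PP QQ e_ge] by (simp add: add_left_mono)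
    finally show ?thesis .
  qed
  have step2: "word_loss P delta s0 T ?fh ?fs \<le> (\<Sum>t<T. \<Sum>x\<in>?W. word_prob P delta s0 x * ?bt t x)
      + (\<Sum>x\<in>?W. word_prob P delta s0 x * ?bf x)"
  proof -
    have "word_loss P delta s0 T ?fh ?fs \<le> (\<Sum>x\<in>?W. word_prob P delta s0 x * ((\<Sum>t<T. ?bt t x) + ?bf x))"
      unfolding word_loss_def
    proof (intro sum_mono mult_left_mono)
      fix x assume "x \<in> ?W"
      then show "?I x \<le> (\<Sum>t<T. ?bt t x) + ?bf x"
        using pointwise[where hhat=hhat and ghat=ghat and x=x and d=delta and F=F] by simp
      show "0 \<le> word_prob P delta s0 x" by (rule wp_nonneg[OF PP])
    qed
    also have "\<dots> = (\<Sum>t<T. \<Sum>x\<in>?W. word_prob P delta s0 x * ?bt t x) + (\<Sum>x\<in>?W. word_prob P delta s0 x * ?bf x)"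
      by (simp only: distrib_left sum.distrib sum_distrib_left sum.swap[of _ ?W])
    finally show ?thesis .
  qed
  have step3: "(\<Sum>x\<in>?W. word_prob P delta s0 x * ?bf x) = final_loss (P_t P delta s0 (T+1)) hhat F"
    unfolding final_loss_def P_t_def using lemA[where n=T and P=P and d=delta and h="\<lambda>s. if hhat s \<noteq> (s \<in> F) then 1 else 0"]
    by simp
  have step4: "(\<Sum>t<T. \<Sum>x\<in>?W. word_prob P delta s0 x * ?bt t x)
      = (\<Sum>t=1..T. trans_loss (\<lambda>(s,c). P_t P delta s0 t s * P s c) ghat delta)"
    unfolding One_nat_def sum.atLeast1_atMost_eq
  proof (rule sum.cong[OF refl])
    fix t assume "t \<in> {..<T}"
    then have "t < T" by simp
    then show "(\<Sum>x\<in>?W. word_prob P delta s0 x * ?bt t x)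
       = trans_loss (\<lambda>(s,c). P_t P delta s0 (Suc t) s * P s c) ghat delta"
      unfolding trans_loss_eq by (rule bad_t[OF PP])
  qed
  have "real T * e \<le> 2 * real T ^ 2 * e"
  proof (rule mult_right_mono[OF _ e0])
    have "real T \<le> real T ^ 2" using assms(1) by (simp add: power2_eq_square)
    then show "real T \<le> 2 * real T ^ 2" using zero_le_power2[of "real T"] by linarith
  qed
  then show ?thesis using step1 step2 step3 step4 unfolding e_def by linarith
qed

end
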